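(* Consider any execution of Algorithm A with $m=n$ registers. Let $\tau\le\tau'$ be two times. If at time $\tau'$ all entries of $\mathit{REG}$ are equal to a single quadruplet $Y$, then there exists an entry $X$ of $\mathit{REG}$ at time $\tau$ such that $Y\sqsupseteq X$.
   Context: Quadruplets, lexicographic order: a quadruplet is $\langle rd,\mathit{lvl},\mathit{cfl},\mathit{val}\rangle$ with $rd\in\mathbb{N}$, $\mathit{lvl}\in\{\mathtt{down}<\mathtt{up}\}$, $\mathit{cfl}\in\{\mathtt{false}<\mathtt{true}\}$, $\mathit{val}$ in a totally ordered value set with a least default $\bot$; quadruplets are totally ordered lexicographically. $X \sqsupset Y$ iff $(X>Y)\wedge[(X.rd>Y.rd)\vee X.\mathit{cfl} \vee (\neg Y.\mathit{cfl}\wedge X.\mathit{val}=Y.\mathit{val})]$; $X\sqsupseteq Y$ iff $X\sqsupset Y$ or $X=Y$. For a nonempty finite set $T$ of quadruplets with lexicographic maximum $\langle r,\ell,c,v\rangle$, $\mathrm{sup}(T)=\langle r,\ell,\mathit{conflict}(T),v\rangle$ where $\mathit{conflict}(T)$ holds iff some element of $T$ of round $r$ has conflict field $\mathtt{true}$, or the elements of $T$ of round $r$ carry at least two distinct values. Model and Algorithm A: $n$ anonymous asynchronous processes (any number may crash) share an atomic snapshot object $\mathit{REG}[1..m]$ of multi-writer registers, each initially $\langle 0,\mathtt{down},\mathtt{false},\bot\rangle$, with atomic operations $\mathrm{snapshot}()$ and $\mathrm{write}(x,X)$; executions are interleavings of atomic steps, one per time instant. A process proposing $v$ repeats forever: $\mathit{view}\leftarrow\mathrm{snapshot}()$;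 then (1) if all entries equal $\langle r,\mathtt{up},\mathtt{false},w\rangle$ with $r>0$, it returns (decides) $w$; (2) else if all entries equal $\langle r,\mathtt{down},\mathtt{false},w\rangle$ with $r>0$, it writes $\langle r+1,\mathtt{up},\mathtt{false},w\rangle$ into $\mathit{REG}[1]$; (3) else if all entries equal $\langle r,\ell,\mathtt{true},w\rangle$ with $r>0$, it writes $\langle r+1,\mathtt{down},\mathtt{false},w\rangle$ into $\mathit{REG}[1]$; (4) otherwise it computes $S=\mathrm{sup}(\{\mathit{view}[1],\dots,\mathit{view}[m],\langle 1,\mathtt{down},\mathtt{false},v\rangle\})$, lets $x$ be the smallest index with $\mathit{view}[x]\neq S$, and writes $S$ into $\mathit{REG}[x]$. *)

theory Defs
  imports Main "HOL-Library.Product_Lexorder"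
begin

datatype lvl = Down | Up

instantiation lvl :: linorder
begin
definition less_eq_lvl :: "lvl \<Rightarrow> lvl \<Rightarrow> bool" where
  "less_eq_lvl a b = (a = Down \<or> b = Up)"
definition less_lvl :: "lvl \<Rightarrow> lvl \<Rightarrow> bool" where
  "less_lvl a b = (a = Down \<and> b = Up)"
instance
  by standard (auto simp: less_eq_lvl_def less_lvl_def elim: lvl.exhaust intro: lvl.exhaust)
end

text \<open>A quadruplet <rd, lvl, cfl, val>; the order on nested pairs (Product_Lexorder)
  is the lexicographic order; on bool, False < True.\<close>
type_synonym 'v quad = "nat \<times> lvl \<times> bool \<times> 'v"

definition rd :: "'v quad \<Rightarrow> nat" where "rd X = fst X"
definition lv :: "'v quad \<Rightarrow> lvl" where "lv X = fst (snd X)"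
definition cfl :: "'v quad \<Rightarrow> bool" where "cfl X = fst (snd (snd X))"
definition val :: "'v quad \<Rightarrow> 'v" where "val X = snd (snd (snd X))"

definition qsqsup :: "'v::linorder quad \<Rightarrow> 'v quad \<Rightarrow> bool" where
  "qsqsup X Y \<longleftrightarrow> X > Y \<and> (rd X > rd Y \<or> cfl X \<or> (\<not> cfl Y \<and> val X = val Y))"

definition qsqsupeq :: "'v::linorder quad \<Rightarrow> 'v quad \<Rightarrow> bool" where
  "qsqsupeq X Y \<longleftrightarrow> qsqsup X Y \<or> X = Y"

definition conflict :: "'v::linorder quad set \<Rightarrow> bool" where
  "conflict T \<longleftrightarrow>
     (let r = rd (Max T) in
       (\<exists>X\<in>T. rd X = r \<and> cfl X) \<or>
       (\<exists>X\<in>T. \<exists>Y\<in>T. rd X = r \<and> rd Y = r \<and> val X \<noteq> val Y))"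

definition qsup :: "'v::linorder quad set \<Rightarrow> 'v quad" where
  "qsup T = (rd (Max T), lv (Max T), conflict T, val (Max T))"

datatype 'v pstate = Snap | Pend nat "'v quad" | Decided

record 'v config =
  mem :: "nat \<Rightarrow> 'v quad"
  loc :: "nat \<Rightarrow> 'v pstate"

definition all_eq :: "(nat \<Rightarrow> 'v quad) \<Rightarrow> nat \<Rightarrow> 'v quad \<Rightarrow> bool" where
  "all_eq view m X \<longleftrightarrow> (\<forall>x\<in>{1..m}. view x = X)"

text \<open>Local computation after a snapshot: None = decide; Some (x, X) = write X into REG[x].\<close>
definition action :: "(nat \<Rightarrow> 'v::linorder quad) \<Rightarrow> nat \<Rightarrow> 'v \<Rightarrow> (nat \<times> 'v quad) option" where
  "action view m v =
    (if \<exists>r w. r > 0 \<and> all_eq view m (r, Up, False, w) then None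
     else if \<exists>r w. r > 0 \<and> all_eq view m (r, Down, False, w)
       then Some (1, (Suc (rd (view 1)), Up, False, val (view 1)))
     else if \<exists>r l w. r > 0 \<and> all_eq view m (r, l, True, w)
       then Some (1, (Suc (rd (view 1)), Down, False, val (view 1)))
     else (let S = qsup (insert (1, Down, False, v) (view ` {1..m}))
           in Some (LEAST x. x \<in> {1..m} \<and> view x \<noteq> S, S)))"

definition init_config :: "'v::order_bot config" where
  "init_config = \<lparr> mem = (\<lambda>x. (0, Down, False, bot)), loc = (\<lambda>p. Snap) \<rparr>"

text \<open>One atomic step of process p (p < n) with proposal v; m = n registers.\<close>
definition step :: "nat \<Rightarrow> 'v::linorder \<Rightarrow> 'v config \<Rightarrow> 'v config \<Rightarrow> nat \<Rightarrow> bool" where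
  "step n v c c' p \<longleftrightarrow>
     (case loc c p of
        Snap \<Rightarrow>
          (case action (mem c) n v of
             None \<Rightarrow> c' = c\<lparr>loc := (loc c)(p := Decided)\<rparr>
           | Some (x, X) \<Rightarrow> c' = c\<lparr>loc := (loc c)(p := Pend x X)\<rparr>)
      | Pend x X \<Rightarrow> c' = \<lparr> mem = (mem c)(x := X), loc = (loc c)(p := Snap) \<rparr>
      | Decided \<Rightarrow> False)"

text \<open>An execution: a sequence of configurations indexed by time, starting in the initial
  configuration, where each time instant is one atomic step of some process, or nothing
  happens (to allow crashes / finite executions).\<close>
definition execution :: "nat \<Rightarrow> (nat \<Rightarrow> 'v::{linorder,order_bot}) \<Rightarrow> (nat \<Rightarrow> 'v config) \<Rightarrow> bool" where
  "execution n props C \<longleftrightarrow>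
     C 0 = init_config \<and>
     (\<forall>t. C (Suc t) = C t \<or> (\<exists>p<n. step n (props p) (C t) (C (Suc t)) p))"

end

theory Submission
  imports Defs
begin

lemma rd_mono: "(X::'v::linorder quad) \<le> Y \<Longrightarrow> rd X \<le> rd Y"
  unfolding rd_def by (cases X; cases Y) (auto simp: less_eq_prod_def)

lemma qsqsup_trans: "qsqsup X Y \<Longrightarrow> qsqsup Y Z \<Longrightarrow> qsqsup X Z"
proof -
  assume a: "qsqsup X Y" "qsqsup Y Z"
  have l: "X > Y" "Y > Z" using a unfolding qsqsup_def by auto
  hence "X > Z" by order
  moreover have "rd X \<ge> rd Y" "rd Y \<ge> rd Z" using l rd_mono less_imp_le by blast+
  ultimately show ?thesis using a unfolding qsqsup_def by auto
qed

lemma qsqsupeq_trans: "qsqsupeq X Y \<Longrightarrow> qsqsupeq Y Z \<Longrightarrow> qsqsupeq X Z"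
  unfolding qsqsupeq_def using qsqsup_trans by blast

lemma qsup_ge:
  fixes T :: "'v::linorder quad set"
  assumes "finite T" "X \<in> T" shows "qsqsupeq (qsup T) X"
proof -
  obtain a b c d where M: "Max T = (a,b,c,d)" by (cases "Max T") auto
  obtain a1 b1 c1 d1 where Xe: "X = (a1,b1,c1,d1)" by (cases X) auto
  have ge: "X \<le> Max T" using assms by simp
  have MT: "Max T \<in> T" using assms by (intro Max_in) auto
  have c1: "c \<Longrightarrow> conflict T" unfolding conflict_def Let_def
    apply (rule disjI1, rule bexI[OF _ MT]) using M by (simp add: rd_def cfl_def)
  have c2: "\<not> conflict T \<Longrightarrow> a1 = a \<Longrightarrow> \<not> c1 \<and> d1 = d" unfolding conflict_def Let_def using MT M assms(2) Xe
    by (auto simp: rd_def cfl_def val_def)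
  show ?thesis unfolding qsup_def M qsqsupeq_def qsqsup_def Xe using ge c1 c2
    unfolding M Xe
    by (auto simp: rd_def lv_def cfl_def val_def less_prod_def less_eq_prod_def)
qed


lemma bigger_rd: "rd (Z::'v::linorder quad) > rd X \<Longrightarrow> qsqsupeq Z X"
  unfolding qsqsupeq_def qsqsup_def rd_def
  by (cases X; cases Z) (auto simp: less_prod_def)

lemma action_ge:
  assumes "action view n v = Some (x, Z)" "y \<in> {1..n}"
  shows "qsqsupeq Z (view y)"
proof -
  have y1: "view y = view 1" if "all_eq view n W" for W using that assms(2) unfolding all_eq_def by auto
  show ?thesis
  proof (cases "\<exists>r w. r > 0 \<and> all_eq view n (r, Up, False, w)")
    case True then show ?thesis using assms(1) unfolding action_def by simp
  next
    case F1: False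
    show ?thesis
    proof (cases "\<exists>r w. r > 0 \<and> all_eq view n (r, Down, False, w)")
      case True
      have "action view n v = Some (1, (Suc (rd (view 1)), Up, False, val (view 1)))"
        unfolding action_def using F1 True by simp
      hence Z: "Z = (Suc (rd (view 1)), Up, False, val (view 1))" using assms(1) by simp
      from True obtain W where "all_eq view n W" by blast
      hence "view y = view 1" by (rule y1)
      then show ?thesis using Z by (intro bigger_rd) (simp add: rd_def)
    next
      case F2: False
      show ?thesis
      proof (cases "\<exists>r l w. r > 0 \<and> all_eq view n (r, l, True, w)")
        case True
        have "action view n v = Some (1, (Suc (rd (view 1)), Down, False, val (view 1)))"
          unfolding action_def using F1 F2 True by simp
        hence Z: "Z = (Suc (rd (view 1)), Down, False, val (view 1))" using assms(1) by simp
        from True obtain W where "all_eq view n W" by blast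
        hence "view y = view 1" by (rule y1)
        then show ?thesis using Z by (intro bigger_rd) (simp add: rd_def)
      next
        case F3: False
        have "action view n v = (let S = qsup (insert (1, Down, False, v) (view ` {1..n}))
           in Some (LEAST x. x \<in> {1..n} \<and> view x \<noteq> S, S))"
          unfolding action_def by (simp only: if_not_P[OF F1] if_not_P[OF F2] if_not_P[OF F3])
        hence "Z = qsup (insert (1, Down, False, v) (view ` {1..n}))"
          using assms(1) by (simp add: Let_def)
        thus ?thesis using assms(2) by (simp add: qsup_ge)
      qed
    qed
  qed
qed


lemma step_cases:
  assumes "step n v c c' p"
  shows "(mem c' = mem c \<and> loc c' = (loc c)(p := Decided)) \<or>
         (\<exists>x X. loc c p = Snap \<and> action (mem c) n v = Some (x,X) \<and> mem c' = mem c \<and> loc c' = (loc c)(p := Pend x X)) \<or>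
         (\<exists>x X. loc c p = Pend x X \<and> mem c' = (mem c)(x:=X) \<and> loc c' = (loc c)(p:=Snap))"
  using assms unfolding step_def by (auto split: pstate.splits option.splits)

lemma inv_W:
  assumes "n \<ge> 1" "execution n props C"
  shows "\<exists>p<n. \<forall>x Z. loc (C t) p = Pend x Z \<longrightarrow> (\<forall>y\<in>{1..n}. qsqsupeq Z (mem (C t) y))"
proof (induction t)
  case 0
  have "C 0 = init_config" using assms(2) unfolding execution_def by simp
  then show ?case using assms(1) by (intro exI[of _ 0]) (simp add: init_config_def)
next
  case (Suc t)
  have "C (Suc t) = C t \<or> (\<exists>p<n. step n (props p) (C t) (C (Suc t)) p)"
    using assms(2) unfolding execution_def by simp
  then show ?case
  proof
    assume "C (Suc t) = C t" then show ?case using Suc.IH by simp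
  next
    assume "\<exists>p<n. step n (props p) (C t) (C (Suc t)) p"
    then obtain p where p: "p < n" "step n (props p) (C t) (C (Suc t)) p" by blast
    from step_cases[OF p(2)] show ?case
    proof (elim disjE exE conjE)
      assume "mem (C (Suc t)) = mem (C t)" "loc (C (Suc t)) = (loc (C t))(p := Decided)"
      then show ?case using p(1) by (intro exI[of _ p]) simp
    next
      fix x X
      assume a: "action (mem (C t)) n (props p) = Some (x, X)" and m: "mem (C (Suc t)) = mem (C t)"
        and l: "loc (C (Suc t)) = (loc (C t))(p := Pend x X)"
      show ?case using p(1) action_ge[OF a] unfolding m l by (intro exI[of _ p]) (simp del: split_paired_All)
    next
      fix x X
      assume "loc (C (Suc t)) = (loc (C t))(p := Snap)"
      then show ?case using p(1) by (intro exI[of _ p]) simp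
    qed
  qed
qed

definition goodq :: "nat \<Rightarrow> (nat \<Rightarrow> 'v::linorder quad) \<Rightarrow> 'v quad \<Rightarrow> bool" where
  "goodq n M0 Z \<longleftrightarrow> (\<exists>x\<in>{1..n}. qsqsupeq Z (M0 x))"

definition Bset :: "nat \<Rightarrow> (nat \<Rightarrow> 'v::linorder quad) \<Rightarrow> (nat \<Rightarrow> 'v quad) \<Rightarrow> nat set" where
  "Bset n M0 M = {x\<in>{1..n}. \<not> goodq n M0 (M x)}"

definition Sset :: "nat \<Rightarrow> (nat \<Rightarrow> 'v::linorder quad) \<Rightarrow> (nat \<Rightarrow> 'v pstate) \<Rightarrow> nat set" where
  "Sset n M0 L = {p. p < n \<and> (\<exists>x Z. L p = Pend x Z \<and> \<not> goodq n M0 Z)}"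

lemma good_trans: "goodq n M0 Y \<Longrightarrow> qsqsupeq Z Y \<Longrightarrow> goodq n M0 Z"
  unfolding goodq_def using qsqsupeq_trans by blast

lemma exists_good:
  assumes "card (Bset n M0 M) < n" shows "\<exists>y\<in>{1..n}. goodq n M0 (M y)"
proof (rule ccontr)
  assume "\<not> ?thesis"
  hence "Bset n M0 M = {1..n}" unfolding Bset_def by auto
  thus False using assms by simp
qed

lemma inv_I:
  assumes "n \<ge> 1" "execution n props C" "\<tau> \<le> t"
  shows "card (Bset n (mem (C \<tau>)) (mem (C t))) + card (Sset n (mem (C \<tau>)) (loc (C t))) < n"
  using assms(3)
proof (induction t rule: dec_induct)
  case base
  let ?M0 = "mem (C \<tau>)"
  have B: "Bset n ?M0 (mem (C \<tau>)) = {}" unfolding Bset_def goodq_def qsqsupeq_def by auto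
  obtain p where p: "p < n" "\<forall>x Z. loc (C \<tau>) p = Pend x Z \<longrightarrow> (\<forall>y\<in>{1..n}. qsqsupeq Z (mem (C \<tau>) y))"
    using inv_W[OF assms(1,2)] by blast
  have "Sset n ?M0 (loc (C \<tau>)) \<subseteq> {..<n} - {p}"
    unfolding Sset_def goodq_def using p assms(1) by fastforce
  hence "card (Sset n ?M0 (loc (C \<tau>))) \<le> card ({..<n} - {p})" by (intro card_mono) auto
  also have "\<dots> < n" using p by simp
  finally show ?case using B by simp
next
  case (step t)
  let ?M0 = "mem (C \<tau>)"
  let ?B = "Bset n ?M0 (mem (C t))" and ?S = "Sset n ?M0 (loc (C t))"
  let ?B' = "Bset n ?M0 (mem (C (Suc t)))" and ?S' = "Sset n ?M0 (loc (C (Suc t)))"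
  have finS: "finite ?S" "finite ?S'" unfolding Sset_def by auto
  have finB: "finite ?B" "finite ?B'" unfolding Bset_def by auto
  have "C (Suc t) = C t \<or> (\<exists>p<n. step n (props p) (C t) (C (Suc t)) p)"
    using assms(2) unfolding execution_def by simp
  then show ?case
  proof
    assume "C (Suc t) = C t" then show ?case using step.IH by simp
  next
    assume "\<exists>p<n. step n (props p) (C t) (C (Suc t)) p"
    then obtain p where p: "p < n" "step n (props p) (C t) (C (Suc t)) p" by blast
    from step_cases[OF p(2)] show ?case
    proof (elim disjE exE conjE)
      assume m: "mem (C (Suc t)) = mem (C t)" and l: "loc (C (Suc t)) = (loc (C t))(p := Decided)"
      have "?S' \<subseteq> ?S" unfolding Sset_def l by auto
      hence "card ?S' \<le> card ?S" using finS by (intro card_mono) auto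
      then show ?case using step.IH m by simp
    next
      fix x X
      assume a: "action (mem (C t)) n (props p) = Some (x, X)" and m: "mem (C (Suc t)) = mem (C t)"
        and l: "loc (C (Suc t)) = (loc (C t))(p := Pend x X)"
      have "card ?B < n" using step.IH by simp
      then obtain y where y: "y \<in> {1..n}" "goodq n ?M0 (mem (C t) y)" using exists_good by blast
      have "goodq n ?M0 X" using good_trans[OF y(2) action_ge[OF a y(1)]] .
      hence "?S' \<subseteq> ?S" unfolding Sset_def l by auto
      hence "card ?S' \<le> card ?S" using finS by (intro card_mono) auto
      then show ?case using step.IH m by simp
    next
      fix x X
      assume lp: "loc (C t) p = Pend x X" and m: "mem (C (Suc t)) = (mem (C t))(x := X)"
        and l: "loc (C (Suc t)) = (loc (C t))(p := Snap)"
      have S1: "?S' \<subseteq> ?S - {p}" unfolding Sset_def l by auto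
      show ?case
      proof (cases "goodq n ?M0 X")
        case True
        have "?B' \<subseteq> ?B" unfolding Bset_def m using True by auto
        hence "card ?B' \<le> card ?B" using finB by (intro card_mono) auto
        moreover have "card ?S' \<le> card ?S" using S1 finS by (intro card_mono) auto
        ultimately show ?thesis using step.IH by simp
      next
        case False
        have pS: "p \<in> ?S" unfolding Sset_def using lp False p(1) by blast
        have "?B' \<subseteq> insert x ?B" unfolding Bset_def m by auto
        hence "card ?B' \<le> card (insert x ?B)" using finB by (intro card_mono) auto
        also have "\<dots> \<le> Suc (card ?B)" by (simp add: card_insert_le_m1 card_insert_if)
        finally have b: "card ?B' \<le> Suc (card ?B)" .
        have "card ?S' \<le> card (?S - {p})" using S1 finS by (intro card_mono) auto
        also have "\<dots> = card ?S - 1" using pS finS by simp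
        finally have s: "card ?S' \<le> card ?S - 1" .
        have "card ?S \<ge> 1" using pS finS by (metis One_nat_def Suc_leI card_gt_0_iff empty_iff)
        then show ?thesis using b s step.IH by linarith
      qed
    qed
  qed
qed

theorem lemma6:
  fixes n :: nat and props :: "nat \<Rightarrow> 'v::{linorder,order_bot}"
    and C :: "nat \<Rightarrow> 'v config" and \<tau> \<tau>' :: nat and Y :: "'v quad"
  assumes "n \<ge> 1"
    and "\<forall>p<n. props p \<noteq> bot"
    and "execution n props C"
    and "\<tau> \<le> \<tau>'"
    and "\<forall>x\<in>{1..n}. mem (C \<tau>') x = Y"
  shows "\<exists>x\<in>{1..n}. qsqsupeq Y (mem (C \<tau>) x)"
proof -
  have "card (Bset n (mem (C \<tau>)) (mem (C \<tau>'))) < n"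
    using inv_I[OF assms(1,3,4)] by simp
  then obtain y where "y \<in> {1..n}" "goodq n (mem (C \<tau>)) (mem (C \<tau>') y)" using exists_good by blast
  then show ?thesis using assms(5) unfolding goodq_def by auto
qed


end
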